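(* Let $r\in[0,1]$ and let $a\in A$ be such that the pure state $\delta_a$ (all mass on $a$) is stationary under the recombinator dynamics with recombination rate $r$. Suppose: (1) $u(a,a)>u((a'_d,a_{-d}),a)$ for every dimension $d\in D$ and every trait $a'_d\in A_d$ with $a'_d\ne a_d$; and (2) $u(a,a)>(1-r)\,u(a',a)$ for every type $a'\in A$ with $a'\ne a$. Then $\delta_a$ is asymptotically stable under the recombinator dynamics with recombination rate $r$.
   Context: Setting: $D=\{1,\dots,|D|\}$ finite, $|D|\ge2$; finite trait sets $A_d$; types $A=\prod_dA_d$, $a=(a_d,a_{-d})$ with $a_{-d}\in\prod_{d'\ne d}A_{d'}$. Payoff $u:A\times A\to\mathbb{R}_{>0}$, $u(a,a')$ being the payoff of type $a$ against type $a'$. For a state $x\in\Delta(A)$: $u_x(a)=\sum_{a'}x(a')u(a,a')$, $u_x=\sum_ax(a)u_x(a)$, $x(a_d)=\sum_{a_{-d}}x(a_d,a_{-d})$, and for $x(a_d)>0$, $u_x(a_d)=\frac1{x(a_d)}\sum_{a_{-d}}x(a_d,a_{-d})u_x(a_d,a_{-d})$ (with $x(a_d)u_x(a_d):=\sum_{a_{-d}}x(a_d,a_{-d})u_x(a_d,a_{-d})$). Recombinator dynamics with rate $r$: $\dot x(a)=(1-r)\frac{x(a)u_x(a)}{u_x}+r\prod_{a_d\in a}\frac{x(a_d)u_x(a_d)}{u_x}-x(a)$. A state is stationary if $\dot x=0$ there. A state $x^*$ is asymptotically stable if it is Lyapunov stable (for every neighbourhood $U$ of $x^*$ there is a neighbourhood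 $V\subseteq U$ with $x^0\in V\Rightarrow x^t\in U$ for all $t>0$) and there is an open neighbourhood $U$ of $x^*$ with $x^0\in U\Rightarrow \lim_{t\to\infty}x^t=x^*$. *)

theory Defs
  imports "HOL-Analysis.Analysis"
begin

text \<open>Dimensions D are the finite type 'd; traits live in a finite type 'b and the
trait set of dimension d is Ad d.\<close>

definition types :: "('d \<Rightarrow> 'b set) \<Rightarrow> ('d \<Rightarrow> 'b) set" where
  "types Ad = {a. \<forall>d. a d \<in> Ad d}"

definition state_space :: "('d \<Rightarrow> 'b set) \<Rightarrow> (real ^ ('d::finite \<Rightarrow> 'b::finite)) set" where
  "state_space Ad = {x. (\<forall>a. 0 \<le> x $ a) \<and> (\<forall>a. a \<notin> types Ad \<longrightarrow> x $ a = 0)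
                    \<and> (\<Sum>a\<in>types Ad. x $ a) = 1}"

definition pure_state :: "('d::finite \<Rightarrow> 'b::finite) \<Rightarrow> real ^ ('d \<Rightarrow> 'b)" where
  "pure_state a = (\<chi> b. if b = a then 1 else 0)"

definition payoff_vs :: "('d \<Rightarrow> 'b set) \<Rightarrow> (('d \<Rightarrow> 'b) \<Rightarrow> ('d \<Rightarrow> 'b) \<Rightarrow> real)
    \<Rightarrow> real ^ ('d::finite \<Rightarrow> 'b::finite) \<Rightarrow> ('d \<Rightarrow> 'b) \<Rightarrow> real" where
  "payoff_vs Ad u x a = (\<Sum>a'\<in>types Ad. x $ a' * u a a')"

definition mean_payoff :: "('d \<Rightarrow> 'b set) \<Rightarrow> (('d \<Rightarrow> 'b) \<Rightarrow> ('d \<Rightarrow> 'b) \<Rightarrow> real)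
    \<Rightarrow> real ^ ('d::finite \<Rightarrow> 'b::finite) \<Rightarrow> real" where
  "mean_payoff Ad u x = (\<Sum>a\<in>types Ad. x $ a * payoff_vs Ad u x a)"

text \<open>x(a_d) u_x(a_d) = sum over a_{-d} of x(a_d,a_{-d}) u_x(a_d,a_{-d})\<close>
definition trait_mass_payoff :: "('d \<Rightarrow> 'b set) \<Rightarrow> (('d \<Rightarrow> 'b) \<Rightarrow> ('d \<Rightarrow> 'b) \<Rightarrow> real)
    \<Rightarrow> real ^ ('d::finite \<Rightarrow> 'b::finite) \<Rightarrow> 'd \<Rightarrow> 'b \<Rightarrow> real" where
  "trait_mass_payoff Ad u x d t = (\<Sum>a\<in>{a\<in>types Ad. a d = t}. x $ a * payoff_vs Ad u x a)"

definition recomb_field :: "('d \<Rightarrow> 'b set) \<Rightarrow> (('d \<Rightarrow> 'b) \<Rightarrow> ('d \<Rightarrow> 'b) \<Rightarrow> real) \<Rightarrow> real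
    \<Rightarrow> real ^ ('d::finite \<Rightarrow> 'b::finite) \<Rightarrow> real ^ ('d \<Rightarrow> 'b)" where
  "recomb_field Ad u r x = (\<chi> a.
      (1 - r) * (x $ a * payoff_vs Ad u x a) / mean_payoff Ad u x
      + r * (\<Prod>d\<in>UNIV. trait_mass_payoff Ad u x d (a d) / mean_payoff Ad u x)
      - x $ a)"

definition stationary :: "('d \<Rightarrow> 'b set) \<Rightarrow> (('d \<Rightarrow> 'b) \<Rightarrow> ('d \<Rightarrow> 'b) \<Rightarrow> real) \<Rightarrow> real
    \<Rightarrow> real ^ ('d::finite \<Rightarrow> 'b::finite) \<Rightarrow> bool" where
  "stationary Ad u r x \<longleftrightarrow> recomb_field Ad u r x = 0"

definition trajectory :: "('d \<Rightarrow> 'b set) \<Rightarrow> (('d \<Rightarrow> 'b) \<Rightarrow> ('d \<Rightarrow> 'b) \<Rightarrow> real) \<Rightarrow> real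
    \<Rightarrow> (real \<Rightarrow> real ^ ('d::finite \<Rightarrow> 'b::finite)) \<Rightarrow> bool" where
  "trajectory Ad u r X \<longleftrightarrow> (\<forall>t\<ge>0. X t \<in> state_space Ad \<and>
      (X has_vector_derivative recomb_field Ad u r (X t)) (at t within {0..}))"

definition lyapunov_stable :: "('d \<Rightarrow> 'b set) \<Rightarrow> (('d \<Rightarrow> 'b) \<Rightarrow> ('d \<Rightarrow> 'b) \<Rightarrow> real) \<Rightarrow> real
    \<Rightarrow> real ^ ('d::finite \<Rightarrow> 'b::finite) \<Rightarrow> bool" where
  "lyapunov_stable Ad u r xs \<longleftrightarrow>
     (\<forall>U. open U \<and> xs \<in> U \<longrightarrow>
        (\<exists>V. open V \<and> xs \<in> V \<and> V \<subseteq> U \<and>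
           (\<forall>X. trajectory Ad u r X \<and> X 0 \<in> V \<longrightarrow> (\<forall>t>0. X t \<in> U))))"

definition asymptotically_stable :: "('d \<Rightarrow> 'b set) \<Rightarrow> (('d \<Rightarrow> 'b) \<Rightarrow> ('d \<Rightarrow> 'b) \<Rightarrow> real) \<Rightarrow> real
    \<Rightarrow> real ^ ('d::finite \<Rightarrow> 'b::finite) \<Rightarrow> bool" where
  "asymptotically_stable Ad u r xs \<longleftrightarrow> lyapunov_stable Ad u r xs \<and>
     (\<exists>U. open U \<and> xs \<in> U \<and>
        (\<forall>X. trajectory Ad u r X \<and> X 0 \<in> U \<longrightarrow> (X \<longlongrightarrow> xs) at_top))"

end

theory Submission
  imports Defs
begin

lemma prod_le_factor:
  fixes f :: "'d::finite \<Rightarrow> real"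
  assumes "\<And>d. 0 \<le> f d \<and> f d \<le> 1"
  shows "(\<Prod>d\<in>UNIV. f d) \<le> f d0"
proof -
  have "(\<Prod>d\<in>UNIV. f d) = f d0 * (\<Prod>d\<in>UNIV-{d0}. f d)"
    by (simp add: prod.remove)
  also have "\<dots> \<le> f d0 * 1"
    using assms by (intro mult_left_mono prod_le_1) auto
  finally show ?thesis by simp
qed

lemma prod_le_two:
  fixes f :: "'d::finite \<Rightarrow> real"
  assumes "\<And>d. 0 \<le> f d \<and> f d \<le> 1" and "d1 \<noteq> d2"
  shows "(\<Prod>d\<in>UNIV. f d) \<le> f d1 * f d2"
proof -
  have "(\<Prod>d\<in>UNIV. f d) = f d1 * (\<Prod>d\<in>UNIV-{d1}. f d)"
    by (simp add: prod.remove)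
  also have "(\<Prod>d\<in>UNIV-{d1}. f d) = f d2 * (\<Prod>d\<in>UNIV-{d1}-{d2}. f d)"
    using assms(2) by (subst prod.remove[of _ d2]) auto
  also have "f d1 * (f d2 * (\<Prod>d\<in>UNIV-{d1}-{d2}. f d)) \<le> f d1 * (f d2 * 1)"
    using assms(1) by (intro mult_left_mono prod_le_1) (auto intro: mult_nonneg_nonneg)
  finally show ?thesis by simp
qed

lemma aux_ineq:
  fixes y Umax U \<alpha> :: real
  assumes "y*(Umax+2*U) \<le> \<alpha>*U" "0\<le>\<alpha>" "0 \<le> y" "0 \<le> U"
  shows "(1-2*\<alpha>)*U + Umax*y \<le> (1-\<alpha>)*((1-2*y)*U)"
proof -
  have "0 \<le> \<alpha>*y*U" using assms by simp
  then show ?thesis using assms(1) by (simp add: algebra_simps)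
qed

locale rc =
  fixes Ad :: "'d::finite \<Rightarrow> 'b::finite set" and u :: "('d \<Rightarrow> 'b) \<Rightarrow> ('d \<Rightarrow> 'b) \<Rightarrow> real"
    and r :: real and a :: "'d \<Rightarrow> 'b"
  assumes upos: "\<forall>b\<in>types Ad. \<forall>b'\<in>types Ad. u b b' > 0"
    and r0: "0 \<le> r" and r1: "r \<le> 1" and aT: "a \<in> types Ad"
    and h1: "\<forall>d. \<forall>t\<in>Ad d. t \<noteq> a d \<longrightarrow> u a a > u (a(d := t)) a"
    and h2: "\<forall>a'\<in>types Ad. a' \<noteq> a \<longrightarrow> u a a > (1 - r) * u a' a"
begin

definition "T = types Ad"
definition "T' = T - {a}"
definition "C1 = {b\<in>T'. \<exists>d. b = a(d := b d)}"
definition "C2 = T' - C1"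
definition "Umax = Max ((\<lambda>(b,c). u b c) ` (T \<times> T))"
definition "Umin = Min ((\<lambda>(b,c). u b c) ` (T \<times> T))"
definition "U = u a a"
definition "N = real (card T)"
definition "K = Umax / Umin"
definition "\<beta> = Max ({0} \<union> (\<lambda>b. u b a / U) ` C1 \<union> (\<lambda>b. (1-r) * u b a / U) ` C2)"
definition "\<alpha> = (1 - \<beta>) / 2"
definition "M = 1 + N * K / \<alpha>"
definition "y0 = min (\<alpha> * U / (Umax + 2 * U)) (\<alpha> / (2 * M * N * K^2))"
definition "Vf x = (\<Sum>b\<in>C1. x $ b) + M * (\<Sum>b\<in>C2. x $ b)"
definition "yy x = (\<Sum>b\<in>T'. x $ b)"
definition "\<eta> = \<alpha> / (2 * M)"

lemma finT[simp]: "finite T" "finite T'" "finite C1" "finite C2"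
  by (auto simp: T_def T'_def C1_def C2_def)

lemma aT'[simp]: "a \<in> T" "a \<notin> T'" using aT by (auto simp: T_def T'_def)

lemma C_sub: "C1 \<subseteq> T'" "C2 \<subseteq> T'" "C1 \<inter> C2 = {}" "C1 \<union> C2 = T'"
  by (auto simp: C1_def C2_def)

lemma T_ins: "T = insert a T'" using aT by (auto simp: T'_def)

lemma C2_two: assumes "b \<in> C2" shows "\<exists>d1 d2. d1 \<noteq> d2 \<and> b d1 \<noteq> a d1 \<and> b d2 \<noteq> a d2"
proof -
  have bT: "b \<in> T'" "b \<notin> C1" using assms by (auto simp: C2_def)
  then have "b \<noteq> a" by (auto simp: T'_def)
  then obtain d1 where d1: "b d1 \<noteq> a d1" by auto
  show ?thesis
  proof (rule ccontr)
    assume "\<not> ?thesis"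
    then have "\<forall>d. d \<noteq> d1 \<longrightarrow> b d = a d" using d1 by auto
    then have "b = a(d1 := b d1)" by auto
    then show False using bT by (auto simp: C1_def)
  qed
qed

lemma upos': "b \<in> T \<Longrightarrow> c \<in> T \<Longrightarrow> u b c > 0" using upos by (auto simp: T_def)

lemma Umax_ge: "b \<in> T \<Longrightarrow> c \<in> T \<Longrightarrow> u b c \<le> Umax"
  unfolding Umax_def by (rule Max_ge) force+
lemma Umin_le: "b \<in> T \<Longrightarrow> c \<in> T \<Longrightarrow> Umin \<le> u b c"
  unfolding Umin_def by (rule Min_le) force+
lemma Umin_pos: "Umin > 0"
proof -
  have "Umin \<in> (\<lambda>(b,c). u b c) ` (T \<times> T)" unfolding Umin_def
  proof (rule Min_in)
    have "(a,a) \<in> T \<times> T" by simp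
    then show "(\<lambda>(b,c). u b c) ` (T \<times> T) \<noteq> {}" by blast
  qed simp
  then show ?thesis using upos' by auto
qed
lemma Umax_pos: "Umax > 0" using Umax_ge[OF aT'(1) aT'(1)] upos'[OF aT'(1) aT'(1)] by simp
lemma U_pos: "U > 0" using upos' by (simp add: U_def)
lemma U_le: "U \<le> Umax" using Umax_ge by (simp add: U_def)
lemma K_pos: "K > 0" using Umin_pos Umax_pos by (simp add: K_def)
lemma N_ge1: "N \<ge> 1"
proof -
  have "card T \<ge> 1" using aT'(1) finT(1) by (metis One_nat_def Suc_leI card_gt_0_iff empty_iff)
  then show ?thesis by (simp add: N_def)
qed

lemma beta_props: "0 \<le> \<beta>" "\<beta> < 1"
  "\<And>b. b \<in> C1 \<Longrightarrow> u b a \<le> \<beta> * U" "\<And>b. b \<in> C2 \<Longrightarrow> (1-r) * u b a \<le> \<beta> * U"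
proof -
  let ?S = "{0} \<union> (\<lambda>b. u b a / U) ` C1 \<union> (\<lambda>b. (1-r) * u b a / U) ` C2"
  have fS: "finite ?S" by simp
  show "0 \<le> \<beta>" unfolding \<beta>_def by (rule Max_ge[OF fS]) simp
  have "\<beta> \<in> ?S" unfolding \<beta>_def by (rule Max_in[OF fS]) simp
  moreover have "\<forall>s\<in>?S. s < 1"
  proof
    fix s assume "s \<in> ?S"
    then consider "s = 0" | b where "b \<in> C1" "s = u b a / U" | b where "b \<in> C2" "s = (1-r) * u b a / U"
      by auto
    then show "s < 1"
    proof cases
      case 1 then show ?thesis by simp
    next
      case 2
      then obtain d where bd: "b = a(d := b d)" "b \<in> T'" by (auto simp: C1_def)
      then have "b d \<noteq> a d" by (metis T'_def DiffD2 fun_upd_triv singletonI)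
      moreover have "b d \<in> Ad d" using bd by (auto simp: T'_def T_def types_def)
      ultimately have "u b a < U" using h1 bd(1) by (metis U_def)
      then show ?thesis using 2 U_pos by simp
    next
      case 3
      then have "b \<in> types Ad" "b \<noteq> a" by (auto simp: C2_def T'_def T_def)
      then have "(1-r) * u b a < U" using h2 by (simp add: U_def)
      then show ?thesis using 3 U_pos by simp
    qed
  qed
  ultimately show "\<beta> < 1" by blast
  fix b
  show "b \<in> C1 \<Longrightarrow> u b a \<le> \<beta> * U"
  proof -
    assume "b \<in> C1"
    then have "u b a / U \<le> \<beta>" unfolding \<beta>_def by (intro Max_ge[OF fS]) auto
    then show ?thesis using U_pos by (simp add: divide_le_eq)
  qed
  show "b \<in> C2 \<Longrightarrow> (1-r) * u b a \<le> \<beta> * U"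
  proof -
    assume "b \<in> C2"
    then have "(1-r) * u b a / U \<le> \<beta>" unfolding \<beta>_def by (intro Max_ge[OF fS]) auto
    then show ?thesis using U_pos by (simp add: divide_le_eq)
  qed
qed

lemma alpha_pos: "\<alpha> > 0" "\<alpha> \<le> 1/2" using beta_props by (auto simp: \<alpha>_def)
lemma M_ge: "M \<ge> 1" "M * \<alpha> = \<alpha> + N * K"
  using alpha_pos K_pos N_ge1 by (auto simp: M_def field_simps)
lemma y0_pos: "y0 > 0"
  using alpha_pos U_pos Umax_pos M_ge K_pos N_ge1 by (auto simp: y0_def)
lemma eta_pos: "\<eta> > 0" using alpha_pos M_ge by (simp add: \<eta>_def)

lemma field_bound:
  assumes xS: "x \<in> state_space Ad" and yx: "yy x \<le> y0"
  shows "Vf (recomb_field Ad u r x) \<le> - \<eta> * Vf x"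
proof -
  have Tt: "types Ad = T" by (simp add: T_def)
  have x0: "\<And>c. 0 \<le> x $ c" and xout: "\<And>c. c \<notin> T \<Longrightarrow> x $ c = 0" and xs1: "(\<Sum>c\<in>T. x $ c) = 1"
    using xS by (auto simp: state_space_def Tt)
  define y where "y = yy x"
  define y1 where "y1 = (\<Sum>b\<in>C1. x $ b)"
  define y2 where "y2 = (\<Sum>b\<in>C2. x $ b)"
  define ux where "ux = payoff_vs Ad u x"
  define m where "m = mean_payoff Ad u x"
  define Q where "Q = trait_mass_payoff Ad u x"
  define g where "g c = x $ c * ux c" for c
  define G where "G = (\<Sum>c\<in>T'. g c)"
  define G2 where "G2 = (\<Sum>c\<in>C2. g c)"
  have y_split: "y = y1 + y2" unfolding y_def yy_def y1_def y2_def
    using C_sub by (metis finT(3) finT(4) sum.union_disjoint)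
  have y1_0: "y1 \<ge> 0" "y2 \<ge> 0" "y \<ge> 0"
    unfolding y1_def y2_def y_def yy_def by (auto intro: sum_nonneg x0)
  have xa: "x $ a = 1 - y" using xs1 unfolding y_def yy_def T_ins
    by (simp add: sum.insert)
  have yy0: "y \<le> y0" using yx by (simp add: y_def)
  have ux_def': "ux b = (\<Sum>c\<in>T. x $ c * u b c)" for b by (simp add: ux_def payoff_vs_def Tt)
  have m_def': "m = (\<Sum>b\<in>T. g b)" by (simp add: m_def mean_payoff_def g_def ux_def Tt)
  have Q_def': "Q d t = (\<Sum>c\<in>{c\<in>T. c d = t}. g c)" for d t
    by (simp add: Q_def trait_mass_payoff_def g_def ux_def Tt)
  have ux_le: "ux b \<le> Umax" if "b \<in> T" for b
  proof -
    have "ux b \<le> (\<Sum>c\<in>T. x $ c * Umax)" unfolding ux_def'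
      by (intro sum_mono mult_left_mono Umax_ge that x0) auto
    then show ?thesis by (simp add: sum_distrib_right[symmetric] xs1)
  qed
  have ux_ge: "ux b \<ge> Umin" if "b \<in> T" for b
  proof -
    have "ux b \<ge> (\<Sum>c\<in>T. x $ c * Umin)" unfolding ux_def'
      by (intro sum_mono mult_left_mono Umin_le that x0) auto
    then show ?thesis by (simp add: sum_distrib_right[symmetric] xs1)
  qed
  have ux_a: "ux b \<le> u b a + Umax * y" if "b \<in> T" for b
  proof -
    have "ux b = x $ a * u b a + (\<Sum>c\<in>T'. x $ c * u b c)" unfolding ux_def' T_ins
      by (simp add: sum.insert)
    also have "(\<Sum>c\<in>T'. x $ c * u b c) \<le> (\<Sum>c\<in>T'. x $ c * Umax)"
      by (intro sum_mono mult_left_mono Umax_ge that x0) (auto simp: T'_def)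
    also have "\<dots> = Umax * y" by (simp add: y_def yy_def sum_distrib_right[symmetric])
    also have "x $ a * u b a \<le> 1 * u b a"
      using upos'[OF that aT'(1)] xa y1_0 by (intro mult_right_mono) auto
    finally show ?thesis by simp
  qed
  have g0: "g c \<ge> 0" if "c \<in> T" for c
    using ux_ge[OF that] Umin_pos x0 by (simp add: g_def)
  have gle: "g c \<le> Umax * x $ c" if "c \<in> T" for c
    using ux_le[OF that] x0[of c] unfolding g_def by (metis mult.commute mult_left_mono)
  have m_split: "m = g a + G" unfolding m_def' G_def T_ins by (simp add: sum.insert)
  have m_ge: "m \<ge> Umin"
  proof -
    have "m \<ge> (\<Sum>b\<in>T. x $ b * Umin)" unfolding m_def' g_def
      by (intro sum_mono mult_left_mono ux_ge x0) auto
    then show ?thesis by (simp add: sum_distrib_right[symmetric] xs1)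
  qed
  have m_pos: "m > 0" using m_ge Umin_pos by simp
  have G0: "G \<ge> 0" unfolding G_def by (intro sum_nonneg g0) (auto simp: T'_def)
  have ga0: "g a \<ge> 0" using g0 by simp
  have m_ge2: "m \<ge> (1 - 2 * y) * U"
  proof -
    have "ux a = x $ a * u a a + (\<Sum>c\<in>T'. x $ c * u a c)" unfolding ux_def' T_ins
      by (simp add: sum.insert)
    moreover have "(\<Sum>c\<in>T'. x $ c * u a c) \<ge> 0" using x0 upos'
      by (intro sum_nonneg mult_nonneg_nonneg) (auto simp: T'_def less_imp_le)
    ultimately have "ux a \<ge> x $ a * u a a" by simp
    then have "g a \<ge> x $ a * (x $ a * U)" unfolding g_def U_def using x0[of a] by (simp add: mult_left_mono)
    moreover have "x $ a * (x $ a * U) = (1-y)^2 * U" by (simp add: xa power2_eq_square)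
    moreover have "(1-y)^2 * U \<ge> (1 - 2*y) * U" using U_pos
      by (intro mult_right_mono) (auto simp: power2_eq_square algebra_simps)
    ultimately show ?thesis using m_split G0 by linarith
  qed
  have G_le: "G \<le> Umax * y" unfolding G_def y_def yy_def sum_distrib_left
    by (intro sum_mono gle) (auto simp: T'_def)
  have G2_le: "G2 \<le> Umax * y2" unfolding G2_def y2_def sum_distrib_left
    using C_sub by (intro sum_mono gle) (auto simp: T'_def)
  have Q0: "0 \<le> Q d t" for d t unfolding Q_def' by (intro sum_nonneg g0) auto
  have Qm: "Q d t \<le> m" for d t unfolding Q_def' m_def'
    by (intro sum_mono2 g0) auto
  have QG: "Q d t \<le> G" if "t \<noteq> a d" for d t unfolding Q_def' G_def
    using that by (intro sum_mono2 g0) (auto simp: T'_def)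
  have Q1: "Q d (b d) \<le> g b + G2" if that1: "b \<in> C1" and that2: "b d \<noteq> a d" for b d
  proof -
    have sub: "{c\<in>T. c d = b d} \<subseteq> insert b C2"
    proof
      fix c assume c: "c \<in> {c\<in>T. c d = b d}"
      show "c \<in> insert b C2"
      proof (rule ccontr)
        assume nc: "c \<notin> insert b C2"
        have "c \<noteq> a" using c that(2) by auto
        then have "c \<in> T'" using c by (auto simp: T'_def)
        then have "c \<in> C1" using nc by (auto simp: C2_def)
        then obtain d' where cd: "c = a(d' := c d')" by (auto simp: C1_def)
        obtain d'' where bd: "b = a(d'' := b d'')" using that1 by (auto simp: C1_def)
        have "d' = d" using cd c that(2) by (metis (mono_tags, lifting) fun_upd_other mem_Collect_eq)
        have "d'' = d" using bd that(2) by (metis fun_upd_other)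
        then show False using nc cd bd c \<open>d' = d\<close> by (metis (mono_tags, lifting) insertI1 mem_Collect_eq)
      qed
    qed
    have bC2: "b \<notin> C2" using that by (auto simp: C2_def)
    have "Q d (b d) \<le> (\<Sum>c\<in>insert b C2. g c)" unfolding Q_def'
      using C_sub that(1) by (intro sum_mono2 sub g0) (auto simp: T'_def)
    also have "\<dots> = g b + G2" using bC2 by (simp add: G2_def sum.insert)
    finally show ?thesis .
  qed
  have fac: "\<And>d. 0 \<le> Q d (b d) / m \<and> Q d (b d) / m \<le> 1" for b
    using Q0 Qm m_pos by (auto simp: divide_le_eq)
  have F: "recomb_field Ad u r x $ b = (1-r) * g b / m + r * (\<Prod>d\<in>UNIV. Q d (b d) / m) - x $ b" for b
    by (simp add: recomb_field_def g_def ux_def m_def Q_def)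
  have aux: "ux b \<le> (1-\<alpha>) * m" if "b \<in> T" "u b a \<le> \<beta> * U" for b
  proof -
    have "ux b \<le> \<beta> * U + Umax * y" using ux_a[OF that(1)] that(2) by simp
    also have "\<dots> \<le> (1-\<alpha>) * ((1 - 2*y) * U)"
    proof -
      have "y * (Umax + 2*U) \<le> \<alpha> * U"
        using yy0 U_pos Umax_pos unfolding y0_def by (simp add: le_divide_eq)
      moreover have "\<beta> = 1 - 2*\<alpha>" by (simp add: \<alpha>_def field_simps)
      ultimately show ?thesis using alpha_pos U_pos y1_0 aux_ineq[of y Umax U \<alpha>] by simp
    qed
    also have "\<dots> \<le> (1-\<alpha>) * m" using m_ge2 alpha_pos by (intro mult_left_mono) auto
    finally show ?thesis .
  qed
  have KK: "G / m \<le> K * y" "G2 / m \<le> K * y2"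
  proof -
    have "G / m \<le> G / Umin" using G0 m_ge Umin_pos by (intro divide_left_mono) auto
    also have "\<dots> \<le> Umax * y / Umin" using G_le Umin_pos by (intro divide_right_mono) auto
    finally show "G / m \<le> K * y" by (simp add: K_def)
    have G20: "G2 \<ge> 0" unfolding G2_def using C_sub by (intro sum_nonneg g0) (auto simp: T'_def)
    have "G2 / m \<le> G2 / Umin" using G20 m_ge Umin_pos by (intro divide_left_mono) auto
    also have "\<dots> \<le> Umax * y2 / Umin" using G2_le Umin_pos by (intro divide_right_mono) auto
    finally show "G2 / m \<le> K * y2" by (simp add: K_def)
  qed
  have B1: "recomb_field Ad u r x $ b \<le> - \<alpha> * x $ b + K * y2" if bC: "b \<in> C1" for b
  proof -
    obtain d where bd: "b = a(d := b d)" and bT: "b \<in> T'" using bC by (auto simp: C1_def)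
    have bnd: "b d \<noteq> a d" using bd bT by (metis T'_def DiffD2 fun_upd_triv singletonI)
    have bT2: "b \<in> T" using bT by (simp add: T'_def)
    have "(\<Prod>d\<in>UNIV. Q d (b d) / m) \<le> Q d (b d) / m" by (rule prod_le_factor[OF fac])
    also have "\<dots> \<le> (g b + G2) / m" using Q1[OF bC bnd] m_pos by (intro divide_right_mono) auto
    finally have P: "(\<Prod>d\<in>UNIV. Q d (b d) / m) \<le> (g b + G2) / m" .
    have "recomb_field Ad u r x $ b \<le> (1-r) * g b / m + r * ((g b + G2) / m) - x $ b"
      unfolding F using mult_left_mono[OF P r0] by (simp add: times_divide_eq_right)
    also have "\<dots> = g b / m + r * (G2 / m) - x $ b" using m_pos by (simp add: field_simps)
    also have "r * (G2 / m) \<le> K * y2"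
    proof -
      have "G2 / m \<ge> 0" using m_pos unfolding G2_def using C_sub
        by (intro divide_nonneg_pos sum_nonneg g0) (auto simp: T'_def)
      then have "r * (G2 / m) \<le> 1 * (G2 / m)" using r1 by (intro mult_right_mono) auto
      then show ?thesis using KK(2) by simp
    qed
    also have "g b / m \<le> (1-\<alpha>) * x $ b"
    proof -
      have "ux b \<le> (1-\<alpha>) * m" using aux[OF bT2 beta_props(3)[OF bC]] .
      then have "x $ b * ux b \<le> x $ b * ((1-\<alpha>) * m)" using x0 by (intro mult_left_mono) auto
      then have "g b \<le> ((1-\<alpha>) * x $ b) * m" by (simp add: g_def algebra_simps)
      then show ?thesis using m_pos by (simp add: divide_le_eq)
    qed
    finally show ?thesis by (simp add: algebra_simps)
  qed
  have B2: "recomb_field Ad u r x $ b \<le> - \<alpha> * x $ b + K^2 * y^2" if bC: "b \<in> C2" for b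
  proof -
    obtain d1 d2 where dd: "d1 \<noteq> d2" "b d1 \<noteq> a d1" "b d2 \<noteq> a d2" using C2_two[OF bC] by blast
    have bT2: "b \<in> T" using bC by (simp add: C2_def T'_def)
    have "(\<Prod>d\<in>UNIV. Q d (b d) / m) \<le> Q d1 (b d1) / m * (Q d2 (b d2) / m)"
      by (rule prod_le_two[OF fac dd(1)])
    also have "\<dots> \<le> (K * y) * (K * y)"
    proof -
      have "Q d1 (b d1) / m \<le> G / m" "Q d2 (b d2) / m \<le> G / m"
        using QG dd m_pos by (auto intro: divide_right_mono)
      then have "Q d1 (b d1) / m \<le> K * y" "Q d2 (b d2) / m \<le> K * y" using KK(1) by auto
      then show ?thesis using fac K_pos y1_0 by (intro mult_mono) auto
    qed
    finally have P: "(\<Prod>d\<in>UNIV. Q d (b d) / m) \<le> K^2 * y^2" by (simp add: power2_eq_square algebra_simps)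
    have P0: "0 \<le> K^2 * y^2" by simp
    have "r * (\<Prod>d\<in>UNIV. Q d (b d) / m) \<le> K^2 * y^2"
    proof -
      have Pn: "0 \<le> (\<Prod>d\<in>UNIV. Q d (b d) / m)" using fac by (intro prod_nonneg) auto
      have "r * (\<Prod>d\<in>UNIV. Q d (b d) / m) \<le> 1 * (\<Prod>d\<in>UNIV. Q d (b d) / m)"
        using r1 Pn by (intro mult_right_mono) auto
      then show ?thesis using P by simp
    qed
    moreover have "(1-r) * g b / m \<le> (1-\<alpha>) * x $ b"
    proof -
      have "(1-r) * u b a \<le> \<beta> * U" using beta_props(4)[OF bC] .
      have "(1-r) * ux b \<le> (1-\<alpha>) * m"
      proof -
        have "(1-r) * ux b \<le> (1-r) * u b a + Umax * y"
        proof -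
          have "(1-r) * ux b \<le> (1-r) * (u b a + Umax * y)"
            using ux_a[OF bT2] r1 by (intro mult_left_mono) auto
          moreover have "(1-r) * (Umax * y) \<le> 1 * (Umax * y)"
            using r0 Umax_pos y1_0 by (intro mult_right_mono) auto
          ultimately show ?thesis by (simp add: algebra_simps)
        qed
        also have "\<dots> \<le> \<beta> * U + Umax * y" using beta_props(4)[OF bC] by simp
        also have "\<dots> \<le> (1-\<alpha>) * ((1 - 2*y) * U)"
        proof -
          have "y * (Umax + 2*U) \<le> \<alpha> * U"
            using yy0 U_pos Umax_pos unfolding y0_def by (simp add: le_divide_eq)
          moreover have "\<beta> = 1 - 2*\<alpha>" by (simp add: \<alpha>_def field_simps)
          ultimately show ?thesis using alpha_pos U_pos y1_0 aux_ineq[of y Umax U \<alpha>] by simp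
        qed
        also have "\<dots> \<le> (1-\<alpha>) * m" using m_ge2 alpha_pos by (intro mult_left_mono) auto
        finally show ?thesis .
      qed
      then have "x $ b * ((1-r) * ux b) \<le> x $ b * ((1-\<alpha>) * m)" using x0 by (intro mult_left_mono) auto
      then have "(1-r) * g b \<le> ((1-\<alpha>) * x $ b) * m" by (simp add: g_def algebra_simps)
      then show ?thesis using m_pos by (simp add: divide_le_eq)
    qed
    ultimately show ?thesis unfolding F by (simp add: algebra_simps)
  qed
  have S1: "(\<Sum>b\<in>C1. recomb_field Ad u r x $ b) \<le> - \<alpha> * y1 + N * K * y2"
  proof -
    have "(\<Sum>b\<in>C1. recomb_field Ad u r x $ b) \<le> (\<Sum>b\<in>C1. - \<alpha> * x $ b + K * y2)"
      by (intro sum_mono B1)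
    also have "\<dots> = - \<alpha> * y1 + real (card C1) * (K * y2)"
      by (simp add: sum_subtractf y1_def sum_distrib_left sum_negf)
    also have "real (card C1) * (K * y2) \<le> N * (K * y2)"
      using K_pos y1_0 C_sub unfolding N_def T'_def
      by (intro mult_right_mono) (auto intro!: card_mono)
    finally show ?thesis by simp
  qed
  have S2: "(\<Sum>b\<in>C2. recomb_field Ad u r x $ b) \<le> - \<alpha> * y2 + N * (K^2 * y^2)"
  proof -
    have "(\<Sum>b\<in>C2. recomb_field Ad u r x $ b) \<le> (\<Sum>b\<in>C2. - \<alpha> * x $ b + K^2 * y^2)"
      by (intro sum_mono B2)
    also have "\<dots> = - \<alpha> * y2 + real (card C2) * (K^2 * y^2)"
      by (simp add: sum_subtractf y2_def sum_distrib_left sum_negf)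
    also have "real (card C2) * (K^2 * y^2) \<le> N * (K^2 * y^2)"
      using C_sub unfolding N_def T'_def
      by (intro mult_right_mono) (auto intro!: card_mono)
    finally show ?thesis by simp
  qed
  have "Vf (recomb_field Ad u r x) \<le> - \<alpha> * y1 + N * K * y2 + M * (- \<alpha> * y2 + N * (K^2 * y^2))"
  proof -
    have "M * (\<Sum>b\<in>C2. recomb_field Ad u r x $ b) \<le> M * (- \<alpha> * y2 + N * (K^2 * y^2))"
      using S2 M_ge(1) by (intro mult_left_mono) auto
    then show ?thesis unfolding Vf_def using S1 by linarith
  qed
  also have "\<dots> = - \<alpha> * y + M * N * K^2 * y * y"
    using M_ge(2) y_split by (simp add: algebra_simps power2_eq_square)
  also have "M * N * K^2 * y * y \<le> M * N * K^2 * y * y0"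
    using yy0 y1_0 M_ge N_ge1 by (intro mult_left_mono) auto
  also have "M * N * K^2 * y * y0 \<le> \<alpha> / 2 * y"
  proof -
    have "y0 \<le> \<alpha> / (2 * M * N * K^2)" by (simp add: y0_def)
    then have "M * N * K^2 * y0 \<le> \<alpha> / 2"
      using M_ge N_ge1 K_pos by (simp add: le_divide_eq algebra_simps)
    then have "y * (M * N * K^2 * y0) \<le> y * (\<alpha> / 2)" using y1_0 by (intro mult_left_mono) auto
    then show ?thesis by (simp add: algebra_simps)
  qed
  also have "- \<alpha> * y + \<alpha> / 2 * y = - (\<alpha>/2) * y" by simp
  also have "- (\<alpha>/2) * y \<le> - \<eta> * Vf x"
  proof -
    have "Vf x \<le> M * y" unfolding Vf_def y_split y1_def[symmetric] y2_def[symmetric]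
    proof -
      have "1 * y1 \<le> M * y1" using M_ge y1_0 by (intro mult_right_mono) auto
      then show "y1 + M * y2 \<le> M * (y1 + y2)" by (simp add: algebra_simps)
    qed
    then have "\<eta> * Vf x \<le> \<eta> * (M * y)" using eta_pos by (intro mult_left_mono) auto
    also have "\<eta> * (M * y) = (\<alpha>/2) * y" using M_ge by (simp add: \<eta>_def)
    finally show ?thesis by simp
  qed
  finally show ?thesis by simp
qed

end

context rc begin

lemma V_lin: "bounded_linear Vf"
  unfolding Vf_def[abs_def]
  by (intro bounded_linear_add bounded_linear_sum bounded_linear_mult_right bounded_linear_vec_nth
        bounded_linear_compose[OF bounded_linear_mult_right])

lemma S_facts: assumes "x \<in> state_space Ad"
  shows "\<And>c. 0 \<le> x $ c" "\<And>c. c \<notin> T \<Longrightarrow> x $ c = 0" "(\<Sum>c\<in>T. x $ c) = 1"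
  using assms by (auto simp: state_space_def T_def)

lemma V_bounds: assumes "x \<in> state_space Ad"
  shows "yy x \<le> Vf x" "Vf x \<le> M * yy x" "0 \<le> yy x"
proof -
  note x0 = S_facts(1)[OF assms]
  have y: "yy x = (\<Sum>b\<in>C1. x $ b) + (\<Sum>b\<in>C2. x $ b)"
    unfolding yy_def using C_sub by (metis finT(3) finT(4) sum.union_disjoint)
  have s0: "0 \<le> (\<Sum>b\<in>C1. x $ b)" "0 \<le> (\<Sum>b\<in>C2. x $ b)" by (auto intro: sum_nonneg x0)
  have "1 * (\<Sum>b\<in>C2. x $ b) \<le> M * (\<Sum>b\<in>C2. x $ b)" using M_ge s0 by (intro mult_right_mono) auto
  then show "yy x \<le> Vf x" unfolding Vf_def y by simp
  have "1 * (\<Sum>b\<in>C1. x $ b) \<le> M * (\<Sum>b\<in>C1. x $ b)" using M_ge s0 by (intro mult_right_mono) auto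
  then show "Vf x \<le> M * yy x" unfolding Vf_def y by (simp add: algebra_simps)
  show "0 \<le> yy x" using y s0 by simp
qed

lemma dist_bounds: assumes "x \<in> state_space Ad"
  shows "yy x \<le> dist x (pure_state a)" "dist x (pure_state a) \<le> 2 * yy x"
proof -
  note x0 = S_facts(1)[OF assms] and xout = S_facts(2)[OF assms] and xs = S_facts(3)[OF assms]
  have xa: "x $ a = 1 - yy x" using xs unfolding yy_def T_ins by (simp add: sum.insert)
  have "yy x = \<bar>(x - pure_state a) $ a\<bar>" using V_bounds(3)[OF assms] xa by (simp add: pure_state_def)
  also have "\<dots> \<le> norm (x - pure_state a)" by (rule component_le_norm_cart)
  finally show "yy x \<le> dist x (pure_state a)" by (simp add: dist_norm)
  have "dist x (pure_state a) \<le> (\<Sum>i\<in>UNIV. \<bar>(x - pure_state a) $ i\<bar>)"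
    unfolding dist_norm by (rule norm_le_l1_cart)
  also have "(\<Sum>i\<in>UNIV. \<bar>(x - pure_state a) $ i\<bar>) = (\<Sum>i\<in>T. \<bar>(x - pure_state a) $ i\<bar>)"
  proof (rule sum.mono_neutral_right)
    show "\<forall>i\<in>UNIV - T. \<bar>(x - pure_state a) $ i\<bar> = 0"
      using xout aT'(1) by (auto simp: pure_state_def)
  qed auto
  also have "\<dots> = \<bar>(x - pure_state a) $ a\<bar> + (\<Sum>i\<in>T'. \<bar>(x - pure_state a) $ i\<bar>)"
    unfolding T_ins by (simp add: sum.insert)
  also have "(\<Sum>i\<in>T'. \<bar>(x - pure_state a) $ i\<bar>) = yy x"
    unfolding yy_def by (intro sum.cong) (auto simp: pure_state_def T'_def x0)
  also have "\<bar>(x - pure_state a) $ a\<bar> = yy x" using V_bounds(3)[OF assms] xa by (simp add: pure_state_def)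
  finally show "dist x (pure_state a) \<le> 2 * yy x" by simp
qed

lemma traj_V_deriv:
  assumes "trajectory Ad u r X" "t \<ge> 0"
  shows "((\<lambda>t. Vf (X t)) has_real_derivative Vf (recomb_field Ad u r (X t))) (at t within {0..})"
proof -
  have "(X has_vector_derivative recomb_field Ad u r (X t)) (at t within {0..})"
    using assms by (auto simp: trajectory_def)
  from bounded_linear.has_vector_derivative[OF V_lin this]
  show ?thesis by (simp add: has_real_derivative_iff_has_vector_derivative o_def)
qed

lemma h_mono:
  assumes X: "trajectory Ad u r X" and t: "t \<ge> 0"
    and small: "\<And>s. 0 \<le> s \<Longrightarrow> s < t \<Longrightarrow> Vf (X s) < y0"
  shows "Vf (X t) * exp (\<eta> * t) \<le> Vf (X 0)"
proof -
  define h where "h s = Vf (X s) * exp (\<eta> * s)" for s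
  have hd: "(h has_real_derivative
      (Vf (X s) * (exp (\<eta> * s) * \<eta>) + Vf (recomb_field Ad u r (X s)) * exp (\<eta> * s))) (at s within {0..})"
    if "s \<ge> 0" for s
  proof -
    have e: "((\<lambda>s. exp (\<eta> * s)) has_real_derivative exp (\<eta> * s) * \<eta>) (at s within {0..})"
      by (auto intro!: derivative_eq_intros)
    show ?thesis unfolding h_def by (rule DERIV_mult'[OF traj_V_deriv[OF X that] e])
  qed
  have cont: "continuous_on {0..t} h"
  proof -
    have "continuous_on {0..} h"
      unfolding continuous_on_eq_continuous_within
      using hd by (auto intro: DERIV_continuous)
    then show ?thesis by (rule continuous_on_subset) auto
  qed
  have "h 0 \<ge> h t"
  proof (rule DERIV_nonpos_imp_decreasing_open[OF t _ cont])
    fix s assume s: "0 < s" "s < t"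
    have XS: "X s \<in> state_space Ad" using X s by (auto simp: trajectory_def)
    have "at s within {0..} = at s" by (rule at_within_interior) (use s in auto)
    then have D: "(h has_real_derivative
      (Vf (X s) * (exp (\<eta> * s) * \<eta>) + Vf (recomb_field Ad u r (X s)) * exp (\<eta> * s))) (at s)"
      using hd[of s] s by simp
    have "yy (X s) \<le> y0" using V_bounds(1)[OF XS] small[of s] s by simp
    then have "Vf (recomb_field Ad u r (X s)) + \<eta> * Vf (X s) \<le> 0"
      using field_bound[OF XS] by simp
    then have "(Vf (recomb_field Ad u r (X s)) + \<eta> * Vf (X s)) * exp (\<eta> * s) \<le> 0"
      by (simp add: mult_nonpos_nonneg)
    then show "\<exists>y. (h has_real_derivative y) (at s) \<and> y \<le> 0"
      using D by (intro exI[of _ "Vf (X s) * (exp (\<eta> * s) * \<eta>) + Vf (recomb_field Ad u r (X s)) * exp (\<eta> * s)"])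
        (simp add: algebra_simps)
  qed
  then show ?thesis by (simp add: h_def)
qed

lemma traj_small:
  assumes X: "trajectory Ad u r X" and V0: "Vf (X 0) < y0"
  shows "\<And>t. t \<ge> 0 \<Longrightarrow> Vf (X t) < y0"
proof (rule ccontr)
  fix t assume t: "t \<ge> 0" "\<not> Vf (X t) < y0"
  define S0 where "S0 = {0..} \<inter> (\<lambda>t. Vf (X t)) -` {y0..}"
  have contV: "continuous_on {0..} (\<lambda>t. Vf (X t))"
    unfolding continuous_on_eq_continuous_within
    using traj_V_deriv[OF X] by (auto intro: DERIV_continuous)
  have cl: "closed S0" unfolding S0_def by (rule continuous_closed_preimage[OF contV]) auto
  have ne: "S0 \<noteq> {}" using t by (auto simp: S0_def)
  have bd: "bdd_below S0" unfolding S0_def by (rule bdd_belowI[of _ 0]) auto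
  define s where "s = Inf S0"
  have sS: "s \<in> S0" unfolding s_def by (rule closed_contains_Inf[OF ne bd cl])
  have s0: "s \<ge> 0" "y0 \<le> Vf (X s)" using sS by (auto simp: S0_def)
  have below: "Vf (X s') < y0" if "0 \<le> s'" "s' < s" for s'
  proof (rule ccontr)
    assume "\<not> Vf (X s') < y0"
    then have "s' \<in> S0" using that by (auto simp: S0_def)
    then have "s \<le> s'" unfolding s_def by (rule cInf_lower[OF _ bd])
    then show False using that by simp
  qed
  have "Vf (X s) * exp (\<eta> * s) \<le> Vf (X 0)" by (rule h_mono[OF X s0(1) below])
  moreover have "exp (\<eta> * s) \<ge> 1" using eta_pos s0 by simp
  moreover have "Vf (X s) \<ge> 0" using s0 y0_pos by simp
  ultimately have "Vf (X s) \<le> Vf (X 0)"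
    by (smt (verit) mult_left_mono mult_cancel_left1)
  then show False using s0 V0 by simp
qed

lemma traj_decay:
  assumes X: "trajectory Ad u r X" and V0: "Vf (X 0) < y0" and t: "t \<ge> 0"
  shows "Vf (X t) \<le> Vf (X 0) * exp (- (\<eta> * t))"
proof -
  have "Vf (X t) * exp (\<eta> * t) \<le> Vf (X 0)"
    by (rule h_mono[OF X t]) (use traj_small[OF X V0] in auto)
  then have "Vf (X t) * exp (\<eta> * t) * exp (- (\<eta> * t)) \<le> Vf (X 0) * exp (- (\<eta> * t))"
    by (intro mult_right_mono) auto
  then show ?thesis by (simp add: mult.assoc exp_minus field_simps)
qed

lemma exp_decay_lim: "((\<lambda>t. exp (- (\<eta> * t))) \<longlongrightarrow> 0) at_top"
proof (rule filterlim_compose[OF exp_at_bot])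
  have "filterlim (\<lambda>t. \<eta> * t) at_top at_top"
    using eta_pos by (intro filterlim_tendsto_pos_mult_at_top[OF tendsto_const _ filterlim_ident]) auto
  then show "filterlim (\<lambda>t. - (\<eta> * t)) at_bot at_top"
    by (simp add: filterlim_uminus_at_bot)
qed

lemma main: "asymptotically_stable Ad u r (pure_state a)"
  unfolding asymptotically_stable_def lyapunov_stable_def
proof (intro conjI allI impI)
  let ?p = "pure_state a"
  fix W :: "(real ^ ('d \<Rightarrow> 'b)) set" assume W: "open W \<and> ?p \<in> W"
  then obtain \<epsilon> where e: "\<epsilon> > 0" "ball ?p \<epsilon> \<subseteq> W" by (meson openE)
  define \<rho> where "\<rho> = min y0 \<epsilon> / (2 * M)"
  have \<rho>: "\<rho> > 0" "M * \<rho> \<le> y0 / 2" "2 * (M * \<rho>) \<le> \<epsilon>"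
    using y0_pos e M_ge by (auto simp: \<rho>_def)
  show "\<exists>V. open V \<and> ?p \<in> V \<and> V \<subseteq> W \<and>
           (\<forall>X. trajectory Ad u r X \<and> X 0 \<in> V \<longrightarrow> (\<forall>t>0. X t \<in> W))"
  proof (intro exI[of _ "ball ?p \<rho>"] conjI allI impI)
    have "\<rho> \<le> \<epsilon>"
    proof -
      have "1 * \<rho> \<le> M * \<rho>" using M_ge \<rho> by (intro mult_right_mono) auto
      then show ?thesis using \<rho> by linarith
    qed
    then show "ball ?p \<rho> \<subseteq> W" using e subset_ball by blast
    fix X and t :: real assume X: "trajectory Ad u r X \<and> X 0 \<in> ball ?p \<rho>" and t: "0 < t"
    have X0S: "X 0 \<in> state_space Ad" using X by (auto simp: trajectory_def)
    have XtS: "X t \<in> state_space Ad" using X t by (auto simp: trajectory_def)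
    have "Vf (X 0) \<le> M * yy (X 0)" by (rule V_bounds(2)[OF X0S])
    also have "\<dots> \<le> M * dist (X 0) ?p" using dist_bounds(1)[OF X0S] M_ge by (intro mult_left_mono) auto
    also have "\<dots> < M * \<rho>" using X M_ge by (simp add: dist_commute)
    finally have V0: "Vf (X 0) < M * \<rho>" .
    have V0': "Vf (X 0) < y0" using V0 \<rho> y0_pos by linarith
    have "Vf (X t) \<le> Vf (X 0) * exp (- (\<eta> * t))" using traj_decay[OF conjunct1[OF X] V0'] t by simp
    also have "\<dots> \<le> Vf (X 0) * 1"
      using eta_pos t V_bounds(1,3)[OF X0S] by (intro mult_left_mono) auto
    finally have "Vf (X t) \<le> Vf (X 0)" by simp
    then have "dist (X t) ?p < \<epsilon>"
      using dist_bounds(2)[OF XtS] V_bounds(1)[OF XtS] V0 \<rho> by linarith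
    then show "X t \<in> W" using e by (auto simp: dist_commute)
  qed (use \<rho> in auto)
next
  let ?p = "pure_state a"
  show "\<exists>U. open U \<and> ?p \<in> U \<and> (\<forall>X. trajectory Ad u r X \<and> X 0 \<in> U \<longrightarrow> (X \<longlongrightarrow> ?p) at_top)"
  proof (intro exI[of _ "ball ?p (y0 / (2*M))"] conjI allI impI)
    fix X assume X: "trajectory Ad u r X \<and> X 0 \<in> ball ?p (y0 / (2*M))"
    have X0S: "X 0 \<in> state_space Ad" using X by (auto simp: trajectory_def)
    have "Vf (X 0) \<le> M * yy (X 0)" by (rule V_bounds(2)[OF X0S])
    also have "\<dots> \<le> M * dist (X 0) ?p" using dist_bounds(1)[OF X0S] M_ge by (intro mult_left_mono) auto
    also have "\<dots> < M * (y0 / (2*M))" using X M_ge by (intro mult_strict_left_mono) (auto simp: dist_commute)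
    also have "\<dots> = y0 / 2" using M_ge by simp
    finally have V0': "Vf (X 0) < y0" using y0_pos by linarith
    have bound: "dist (X t) ?p \<le> 2 * Vf (X 0) * exp (- (\<eta> * t))" if "t \<ge> 0" for t
    proof -
      have XtS: "X t \<in> state_space Ad" using X that by (auto simp: trajectory_def)
      have "Vf (X t) \<le> Vf (X 0) * exp (- (\<eta> * t))" using traj_decay[OF conjunct1[OF X] V0' that] .
      then show ?thesis using dist_bounds(2)[OF XtS] V_bounds(1)[OF XtS] by linarith
    qed
    have lim: "((\<lambda>t. 2 * Vf (X 0) * exp (- (\<eta> * t))) \<longlongrightarrow> 0) at_top"
      using tendsto_mult_right_zero[OF exp_decay_lim, of "2 * Vf (X 0)"] by simp
    have "((\<lambda>t. dist (X t) ?p) \<longlongrightarrow> 0) at_top"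
    proof (rule tendsto_sandwich[OF _ _ tendsto_const lim])
      show "\<forall>\<^sub>F t in at_top. 0 \<le> dist (X t) ?p" by simp
      show "\<forall>\<^sub>F t in at_top. dist (X t) ?p \<le> 2 * Vf (X 0) * exp (- (\<eta> * t))"
        using bound by (intro eventually_at_top_linorderI[of 0]) auto
    qed
    then show "(X \<longlongrightarrow> ?p) at_top" using tendsto_dist_iff by blast
  next
    have "y0 / (2*M) > 0" using y0_pos M_ge by simp
    then show "?p \<in> ball ?p (y0 / (2*M))" by simp
  qed simp
qed

end

theorem corollary2:
  fixes Ad :: "'d::finite \<Rightarrow> 'b::finite set"
    and u :: "('d \<Rightarrow> 'b) \<Rightarrow> ('d \<Rightarrow> 'b) \<Rightarrow> real"
    and r :: real and a :: "'d \<Rightarrow> 'b"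
  assumes "CARD('d) \<ge> 2"
    and "\<forall>b\<in>types Ad. \<forall>b'\<in>types Ad. u b b' > 0"
    and "0 \<le> r" and "r \<le> 1"
    and "a \<in> types Ad"
    and "stationary Ad u r (pure_state a)"
    and "\<forall>d. \<forall>t\<in>Ad d. t \<noteq> a d \<longrightarrow> u a a > u (a(d := t)) a"
    and "\<forall>a'\<in>types Ad. a' \<noteq> a \<longrightarrow> u a a > (1 - r) * u a' a"
  shows "asymptotically_stable Ad u r (pure_state a)"
proof -
  interpret rc Ad u r a
    by unfold_locales (use assms in auto)
  show ?thesis by (rule main)
qed

end
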